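(* Let $G=(V,E)$ be a finite simple graph on $n$ vertices. Let $G''$ be any graph with vertex set $V$ obtained as follows: for each vertex $v\in V$, if $v$ is not isolated, choose two distinct vertices of the closed neighborhood $N(v)\cup\{v\}$ (arbitrarily) and put the edge between them into $G''$; if $v$ is isolated, put a loop on $v$ into $G''$ (an edge already present is not duplicated). Then $$\gamma(G)\le n-\alpha(G'')=\beta(G'').$$
   Context: $N(v)$ denotes the set of neighbors of $v$ in $G$. A set $S\subseteq V$ is a dominating set of $G$ if every vertex of $V$ is in $S$ or has a neighbor in $S$; $\gamma(G)$ is the minimum size of a dominating set. For a graph $H$ possibly with loops, an independent set is a set of vertices containing no two endpoints of an edge and no vertex carrying a loop, and $\alpha(H)$ is the maximum size of an independent set; a vertex cover is a set of vertices meeting every edge (so it contains every vertex carrying a loop), and $\beta(H)$ is the minimum size of a vertex cover. *)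

theory Defs
  imports Main
begin

definition simple_graph :: "'a set \<Rightarrow> ('a \<Rightarrow> 'a \<Rightarrow> bool) \<Rightarrow> bool" where
  "simple_graph V E \<longleftrightarrow> finite V \<and> (\<forall>u v. E u v \<longrightarrow> E v u) \<and> (\<forall>v. \<not> E v v)
     \<and> (\<forall>u v. E u v \<longrightarrow> u \<in> V \<and> v \<in> V)"

definition nbhd :: "'a set \<Rightarrow> ('a \<Rightarrow> 'a \<Rightarrow> bool) \<Rightarrow> 'a \<Rightarrow> 'a set" where
  "nbhd V E v = {u \<in> V. E v u}"

definition dominating :: "'a set \<Rightarrow> ('a \<Rightarrow> 'a \<Rightarrow> bool) \<Rightarrow> 'a set \<Rightarrow> bool" where
  "dominating V E S \<longleftrightarrow> S \<subseteq> V \<and> (\<forall>v\<in>V. v \<in> S \<or> (\<exists>u\<in>S. u \<in> nbhd V E v))"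

definition domination_number :: "'a set \<Rightarrow> ('a \<Rightarrow> 'a \<Rightarrow> bool) \<Rightarrow> nat" where
  "domination_number V E = Min {card S | S. dominating V E S}"

text \<open>A graph possibly with loops on vertex set V, given by its set of edges F;
each edge is a set {a,b} of its endpoints (a loop at v is {v,v} = {v}).\<close>
definition indep_set :: "'a set \<Rightarrow> 'a set set \<Rightarrow> 'a set \<Rightarrow> bool" where
  "indep_set V F S \<longleftrightarrow> S \<subseteq> V \<and> (\<forall>e\<in>F. \<forall>a b. e = {a, b} \<longrightarrow> \<not> (a \<in> S \<and> b \<in> S))"

definition vertex_cover :: "'a set \<Rightarrow> 'a set set \<Rightarrow> 'a set \<Rightarrow> bool" where
  "vertex_cover V F S \<longleftrightarrow> S \<subseteq> V \<and> (\<forall>e\<in>F. \<forall>a b. e = {a, b} \<longrightarrow> a \<in> S \<or> b \<in> S)"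

definition independence_number :: "'a set \<Rightarrow> 'a set set \<Rightarrow> nat" where
  "independence_number V F = Max {card S | S. indep_set V F S}"

definition vertex_cover_number :: "'a set \<Rightarrow> 'a set set \<Rightarrow> nat" where
  "vertex_cover_number V F = Min {card S | S. vertex_cover V F S}"

end

theory Submission
  imports Defs
begin

theorem lemma2p3:
  fixes V :: "'a set" and E :: "'a \<Rightarrow> 'a \<Rightarrow> bool" and x y :: "'a \<Rightarrow> 'a"
  assumes "simple_graph V E"
    and "\<And>v. v \<in> V \<Longrightarrow> nbhd V E v \<noteq> {} \<Longrightarrow>
           x v \<noteq> y v \<and> x v \<in> nbhd V E v \<union> {v} \<and> y v \<in> nbhd V E v \<union> {v}"
    and "\<And>v. v \<in> V \<Longrightarrow> nbhd V E v = {} \<Longrightarrow> x v = v \<and> y v = v"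
    and "F = (\<lambda>v. {x v, y v}) ` V"
  shows "domination_number V E \<le> card V - independence_number V F
         \<and> card V - independence_number V F = vertex_cover_number V F"
proof -
  have fin: "finite V" using assms(1) unfolding simple_graph_def by blast
  have xyV: "x v \<in> V \<and> y v \<in> V" if "v \<in> V" for v
  proof (cases "nbhd V E v = {}")
    case True then show ?thesis using assms(3) that by auto
  next
    case False then show ?thesis using assms(2)[OF that False] that
      unfolding nbhd_def by auto
  qed
  have FV: "a \<in> V \<and> b \<in> V" if "{a,b} \<in> F" for a b
  proof -
    from that assms(4) obtain w where "w \<in> V" "{a,b} = {x w, y w}" by auto
    then show ?thesis using xyV[of w] by (metis insertCI doubleton_eq_iff)
  qed
  let ?IS = "{card S | S. indep_set V F S}"
  let ?VC = "{card S | S. vertex_cover V F S}"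
  have ISfin: "finite ?IS"
  proof (rule finite_subset[of _ "{..card V}"])
    show "?IS \<subseteq> {..card V}" using fin unfolding indep_set_def
      by (auto intro: card_mono)
  qed simp
  have "indep_set V F {}" unfolding indep_set_def by auto
  hence ISne: "?IS \<noteq> {}" by blast
  have "independence_number V F \<in> ?IS"
    unfolding independence_number_def using Max_in[OF ISfin ISne] .
  then obtain I where I: "indep_set V F I" "card I = independence_number V F" by auto
  have VCfin: "finite ?VC"
  proof (rule finite_subset[of _ "{..card V}"])
    show "?VC \<subseteq> {..card V}" using fin unfolding vertex_cover_def
      by (auto intro: card_mono)
  qed simp
  have "vertex_cover V F V" unfolding vertex_cover_def using FV by auto
  hence VCne: "?VC \<noteq> {}" by blast
  have "vertex_cover_number V F \<in> ?VC"
    unfolding vertex_cover_number_def using Min_in[OF VCfin VCne] .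
  then obtain C where C: "vertex_cover V F C" "card C = vertex_cover_number V F" by auto
  have IV: "I \<subseteq> V" and CV: "C \<subseteq> V" using I C unfolding indep_set_def vertex_cover_def by auto
  have cI: "card (V - I) = card V - card I" using card_Diff_subset[OF finite_subset[OF IV fin] IV] .
  have cC: "card (V - C) = card V - card C" using card_Diff_subset[OF finite_subset[OF CV fin] CV] .
  have dom: "dominating V E (V - I)"
    unfolding dominating_def
  proof (intro conjI ballI)
    fix v assume v: "v \<in> V"
    show "v \<in> V - I \<or> (\<exists>u\<in>V - I. u \<in> nbhd V E v)"
    proof (cases "v \<in> I")
      case False then show ?thesis using v by auto
    next
      case True
      have e: "{x v, y v} \<in> F" using assms(4) v by auto
      have ni: "\<not> (x v \<in> I \<and> y v \<in> I)" using I(1) e unfolding indep_set_def by blast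
      show ?thesis
      proof (cases "nbhd V E v = {}")
        case True
        then have "x v = v \<and> y v = v" using assms(3) v by auto
        then show ?thesis using ni \<open>v \<in> I\<close> by auto
      next
        case False
        note h = assms(2)[OF v False]
        then show ?thesis using ni \<open>v \<in> I\<close> xyV[OF v] by auto
      qed
    qed
  qed auto
  have domfin: "finite {card S | S. dominating V E S}"
  proof (rule finite_subset[of _ "{..card V}"])
    show "{card S | S. dominating V E S} \<subseteq> {..card V}" using fin unfolding dominating_def
      by (auto intro: card_mono)
  qed simp
  have g: "domination_number V E \<le> card (V - I)"
    unfolding domination_number_def using dom domfin by (auto intro: Min_le)
  have vc: "vertex_cover V F (V - I)"
    using I(1) FV unfolding indep_set_def vertex_cover_def by blast
  have b1: "vertex_cover_number V F \<le> card (V - I)"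
    unfolding vertex_cover_number_def using vc VCfin by (auto intro: Min_le)
  have is2: "indep_set V F (V - C)"
    using C(1) unfolding indep_set_def vertex_cover_def by blast
  have a2: "card (V - C) \<le> independence_number V F"
    unfolding independence_number_def using is2 ISfin by (auto intro: Max_ge)
  have "card C \<le> card V" using CV fin by (simp add: card_mono)
  then show ?thesis using g b1 a2 cI cC I(2) C(2) by linarith
qed

end
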